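(* Let $(X,\varepsilon)$ and $(Y,\zeta)$ be locally compact paracompact Hausdorff spaces with coarsely connected proper coarse structures, and let $X+_fW\in\mathrm{Pers}(\varepsilon)$. Let $\pi,\pi':Y\to X$ be coarse maps and define $f^\ast(A)=\mathrm{Cl}_W\big(f(\mathrm{Cl}_X(\pi(A)))\big)$ and $f'^\ast(A)=\mathrm{Cl}_W\big(f(\mathrm{Cl}_X(\pi'(A)))\big)$ for $A$ closed in $Y$. If $\pi$ is close to $\pi'$, then $f^\ast=f'^\ast$.
   Context: $X+_fW$ is $X\sqcup W$ with closed sets the $D$ with $D\cap X$ closed in $X$, $D\cap W$ closed in $W$, $f(D\cap X)\subseteq D$, where $f$ (from closed subsets of $X$ to closed subsets of $W$) sends $\emptyset$ to $\emptyset$ and preserves finite unions. Coarse structures, proper and coarsely connected coarse spaces, coarse maps and closeness are in the sense of Roe ($\pi,\pi'$ close means $\{(\pi(y),\pi'(y)):y\in Y\}\in\varepsilon$). $X+_fW\in\mathrm{Pers}(\varepsilon)$ means: $X+_fW$ is compact Hausdorff with $X$ dense, $W$ compact Hausdorff, and every $e\in\varepsilon$ is perspective, i.e. $\mathrm{Cl}_{(X+_fW)^2}(e)\cap((X+_fW)^2-X^2)\subseteq\{(p,p):p\in W\}$. *)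

theory Defs
  imports "HOL-Analysis.Analysis"
begin

definition paracompact_space :: "'a topology \<Rightarrow> bool" where
  "paracompact_space T \<longleftrightarrow>
     (\<forall>\<U>. (\<forall>U\<in>\<U>. openin T U) \<and> topspace T \<subseteq> \<Union>\<U> \<longrightarrow>
        (\<exists>\<V>. (\<forall>V\<in>\<V>. openin T V) \<and> topspace T \<subseteq> \<Union>\<V> \<and>
              (\<forall>V\<in>\<V>. \<exists>U\<in>\<U>. V \<subseteq> U) \<and> locally_finite_in T \<V>))"

definition coarse_structure :: "'a set \<Rightarrow> ('a \<times> 'a) set set \<Rightarrow> bool" where
  "coarse_structure X \<epsilon> \<longleftrightarrow>
     (\<forall>e\<in>\<epsilon>. e \<subseteq> X \<times> X) \<and>
     Id_on X \<in> \<epsilon> \<and>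
     (\<forall>e\<in>\<epsilon>. \<forall>e'. e' \<subseteq> e \<longrightarrow> e' \<in> \<epsilon>) \<and>
     (\<forall>e\<in>\<epsilon>. converse e \<in> \<epsilon>) \<and>
     (\<forall>e\<in>\<epsilon>. \<forall>e'\<in>\<epsilon>. e \<union> e' \<in> \<epsilon>) \<and>
     (\<forall>e\<in>\<epsilon>. \<forall>e'\<in>\<epsilon>. e O e' \<in> \<epsilon>)"

definition coarse_bounded :: "('a \<times> 'a) set set \<Rightarrow> 'a set \<Rightarrow> bool" where
  "coarse_bounded \<epsilon> B \<longleftrightarrow> B \<times> B \<in> \<epsilon>"

definition coarsely_connected :: "'a set \<Rightarrow> ('a \<times> 'a) set set \<Rightarrow> bool" where
  "coarsely_connected X \<epsilon> \<longleftrightarrow> (\<forall>x\<in>X. \<forall>y\<in>X. {(x, y)} \<in> \<epsilon>)"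

definition proper_coarse_structure :: "'a topology \<Rightarrow> ('a \<times> 'a) set set \<Rightarrow> bool" where
  "proper_coarse_structure T \<epsilon> \<longleftrightarrow>
     coarse_structure (topspace T) \<epsilon> \<and>
     (\<forall>B. B \<subseteq> topspace T \<and> coarse_bounded \<epsilon> B \<longrightarrow> compactin T (T closure_of B)) \<and>
     (\<exists>\<U>. (\<forall>U\<in>\<U>. openin T U) \<and> topspace T \<subseteq> \<Union>\<U> \<and> (\<Union>U\<in>\<U>. U \<times> U) \<in> \<epsilon>)"

definition coarse_map ::
  "'b set \<Rightarrow> ('b \<times> 'b) set set \<Rightarrow> 'a set \<Rightarrow> ('a \<times> 'a) set set \<Rightarrow> ('b \<Rightarrow> 'a) \<Rightarrow> bool" where
  "coarse_map Y \<zeta> X \<epsilon> \<pi> \<longleftrightarrow>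
     (\<forall>y\<in>Y. \<pi> y \<in> X) \<and>
     (\<forall>e\<in>\<zeta>. (\<lambda>(a, b). (\<pi> a, \<pi> b)) ` e \<in> \<epsilon>) \<and>
     (\<forall>B. B \<subseteq> X \<and> coarse_bounded \<epsilon> B \<longrightarrow> coarse_bounded \<zeta> ({y\<in>Y. \<pi> y \<in> B}))"

definition coarse_close :: "'b set \<Rightarrow> ('a \<times> 'a) set set \<Rightarrow> ('b \<Rightarrow> 'a) \<Rightarrow> ('b \<Rightarrow> 'a) \<Rightarrow> bool" where
  "coarse_close Y \<epsilon> \<pi> \<pi>' \<longleftrightarrow> {(\<pi> y, \<pi>' y) | y. y \<in> Y} \<in> \<epsilon>"

text \<open>Closed sets of X +_f W, realised on the disjoint union type \<open>'a + 'c\<close>.\<close>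
definition coronal_closed :: "'a topology \<Rightarrow> 'c topology \<Rightarrow> ('a set \<Rightarrow> 'c set) \<Rightarrow> ('a + 'c) set \<Rightarrow> bool" where
  "coronal_closed TX TW f D \<longleftrightarrow>
     D \<subseteq> Inl ` topspace TX \<union> Inr ` topspace TW \<and>
     closedin TX (Inl -` D) \<and> closedin TW (Inr -` D) \<and>
     Inr ` f (Inl -` D) \<subseteq> D"

definition coronal_sum :: "'a topology \<Rightarrow> 'c topology \<Rightarrow> ('a set \<Rightarrow> 'c set) \<Rightarrow> ('a + 'c) topology" where
  "coronal_sum TX TW f = topology (\<lambda>U.
     U \<subseteq> Inl ` topspace TX \<union> Inr ` topspace TW \<and>
     coronal_closed TX TW f ((Inl ` topspace TX \<union> Inr ` topspace TW) - U))"

definition coronal_map :: "'a topology \<Rightarrow> 'c topology \<Rightarrow> ('a set \<Rightarrow> 'c set) \<Rightarrow> bool" where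
  "coronal_map TX TW f \<longleftrightarrow>
     (\<forall>A. closedin TX A \<longrightarrow> closedin TW (f A)) \<and>
     f {} = {} \<and>
     (\<forall>A B. closedin TX A \<and> closedin TX B \<longrightarrow> f (A \<union> B) = f A \<union> f B)"

definition perspective :: "'a topology \<Rightarrow> 'c topology \<Rightarrow> ('a set \<Rightarrow> 'c set) \<Rightarrow> ('a \<times> 'a) set \<Rightarrow> bool" where
  "perspective TX TW f e \<longleftrightarrow>
     (let T = coronal_sum TX TW f; XX = Inl ` topspace TX in
       (prod_topology T T) closure_of ((\<lambda>(a, b). (Inl a, Inl b)) ` e)
         \<inter> (topspace T \<times> topspace T - XX \<times> XX)
       \<subseteq> {(Inr p, Inr p) | p. p \<in> topspace TW})"

definition Pers :: "'a topology \<Rightarrow> ('a \<times> 'a) set set \<Rightarrow> 'c topology \<Rightarrow> ('a set \<Rightarrow> 'c set) \<Rightarrow> bool" where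
  "Pers TX \<epsilon> TW f \<longleftrightarrow>
     (let T = coronal_sum TX TW f in
       compact_space T \<and> Hausdorff_space T \<and>
       T closure_of (Inl ` topspace TX) = topspace T \<and>
       compact_space TW \<and> Hausdorff_space TW \<and>
       (\<forall>e\<in>\<epsilon>. perspective TX TW f e))"

definition pull_corona :: "'b topology \<Rightarrow> 'a topology \<Rightarrow> 'c topology \<Rightarrow> ('a set \<Rightarrow> 'c set) \<Rightarrow> ('b \<Rightarrow> 'a) \<Rightarrow> 'b set \<Rightarrow> 'c set" where
  "pull_corona TY TX TW f \<pi> A = TW closure_of (f (TX closure_of (\<pi> ` A)))"

end

theory Submission imports Defs begin

lemma cm_mono:
  assumes "coronal_map TX TW f" "closedin TX A" "closedin TX B" "A \<subseteq> B"
  shows "f A \<subseteq> f B"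
proof -
  have "f B = f (A \<union> B)" using assms(4) by (simp add: Un_absorb1)
  also have "\<dots> = f A \<union> f B" using assms unfolding coronal_map_def by blast
  finally show ?thesis by blast
qed

lemma cs_istop:
  assumes cm: "coronal_map TX TW f"
  defines "S \<equiv> Inl ` topspace TX \<union> Inr ` topspace TW"
  shows "istopology (\<lambda>U. U \<subseteq> S \<and> coronal_closed TX TW f (S - U))"
proof -
  have A: "U \<inter> V \<subseteq> S \<and> coronal_closed TX TW f (S - U \<inter> V)"
   if U: "U \<subseteq> S" "coronal_closed TX TW f (S - U)"
    and V: "V \<subseteq> S" "coronal_closed TX TW f (S - V)" for U V
  proof
  show "U \<inter> V \<subseteq> S" using U by blast
  have e: "S - U \<inter> V = (S - U) \<union> (S - V)" by blast
  have c1: "closedin TX (Inl -` (S - U))" "closedin TX (Inl -` (S - V))"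
    using U V unfolding coronal_closed_def by auto
  have un: "\<And>A B. closedin TX A \<Longrightarrow> closedin TX B \<Longrightarrow> f (A \<union> B) = f A \<union> f B"
    using cm unfolding coronal_map_def by blast
  have fe: "f (Inl -` (S - U \<inter> V)) = f (Inl -` (S - U)) \<union> f (Inl -` (S - V))"
    unfolding e vimage_Un using c1 by (rule un)
  have sub: "S - U \<inter> V \<subseteq> Inl ` topspace TX \<union> Inr ` topspace TW"
    unfolding S_def by blast
  have c2: "closedin TW (Inr -` (S - U))" "closedin TW (Inr -` (S - V))"
    using U V unfolding coronal_closed_def by auto
  have i1: "Inr ` f (Inl -` (S - U)) \<subseteq> S - U" "Inr ` f (Inl -` (S - V)) \<subseteq> S - V"
    using U V unfolding coronal_closed_def by auto
  have d1: "closedin TX (Inl -` (S - U \<inter> V))" unfolding e vimage_Un using c1 by (rule closedin_Un)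
  have d2: "closedin TW (Inr -` (S - U \<inter> V))" unfolding e vimage_Un using c2 by (rule closedin_Un)
  have d3a: "Inr ` f (Inl -` (S - U \<inter> V)) = Inr ` f (Inl -` (S - U)) \<union> Inr ` f (Inl -` (S - V))"
    unfolding fe by (rule image_Un)
  have d3: "Inr ` f (Inl -` (S - U \<inter> V)) \<subseteq> S - U \<inter> V"
    unfolding d3a unfolding e using i1 by (rule Un_mono)
  show "coronal_closed TX TW f (S - U \<inter> V)"
    unfolding coronal_closed_def using sub d1 d2 d3 by (intro conjI)
  qed
  have B: "\<Union>K \<subseteq> S \<and> coronal_closed TX TW f (S - \<Union>K)"
    if K: "\<forall>U\<in>K. U \<subseteq> S \<and> coronal_closed TX TW f (S - U)" for K
  proof
  show "\<Union>K \<subseteq> S" using K by blast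
  show "coronal_closed TX TW f (S - \<Union>K)"
  proof (cases "K = {}")
    case True
    have i: "Inl -` S = topspace TX" "Inr -` S = topspace TW" by (auto simp: S_def)
    have "closedin TW (f (topspace TX))" using cm unfolding coronal_map_def by auto
    then have "f (topspace TX) \<subseteq> topspace TW" by (simp add: closedin_subset)
    then have "Inr ` f (topspace TX) \<subseteq> S" by (auto simp: S_def)
    moreover have eS: "S - \<Union>K = S" using True by simp
    moreover have "S \<subseteq> Inl ` topspace TX \<union> Inr ` topspace TW" by (simp add: S_def)
    ultimately show ?thesis unfolding coronal_closed_def eS i by simp
  next
    case False
    have e: "S - \<Union>K = (\<Inter>U\<in>K. S - U)" using False by blast
    have cl: "\<And>U. U \<in> K \<Longrightarrow> closedin TX (Inl -` (S - U))"
      "\<And>U. U \<in> K \<Longrightarrow> closedin TW (Inr -` (S - U))"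
      "\<And>U. U \<in> K \<Longrightarrow> Inr ` f (Inl -` (S - U)) \<subseteq> S - U"
      using K unfolding coronal_closed_def by auto
    have v1: "Inl -` (S - \<Union>K) = (\<Inter>U\<in>K. Inl -` (S - U))" unfolding e by auto
    have v2: "Inr -` (S - \<Union>K) = (\<Inter>U\<in>K. Inr -` (S - U))" unfolding e by auto
    have c1: "closedin TX (Inl -` (S - \<Union>K))" unfolding v1
      using False cl(1) by (intro closedin_Inter) auto
    have c2: "closedin TW (Inr -` (S - \<Union>K))" unfolding v2
      using False cl(2) by (intro closedin_Inter) auto
    have "Inr ` f (Inl -` (S - \<Union>K)) \<subseteq> S - U" if "U \<in> K" for U
    proof -
      have "S - \<Union>K \<subseteq> S - U" using that by blast
      then have "Inl -` (S - \<Union>K) \<subseteq> Inl -` (S - U)" by (rule vimage_mono)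
      then have "f (Inl -` (S - \<Union>K)) \<subseteq> f (Inl -` (S - U))"
        by (rule cm_mono[OF cm c1 cl(1)[OF that]])
      then have "Inr ` f (Inl -` (S - \<Union>K)) \<subseteq> Inr ` f (Inl -` (S - U))" by (rule image_mono)
      then show ?thesis using cl(3)[OF that] by (rule subset_trans)
    qed
    then have "Inr ` f (Inl -` (S - \<Union>K)) \<subseteq> (\<Inter>U\<in>K. S - U)" by (rule INT_greatest)
    then have c3: "Inr ` f (Inl -` (S - \<Union>K)) \<subseteq> S - \<Union>K" by (simp only: e[symmetric])
    have sub: "S - \<Union>K \<subseteq> Inl ` topspace TX \<union> Inr ` topspace TW" unfolding S_def by blast
    show ?thesis unfolding coronal_closed_def using sub c1 c2 c3 by (intro conjI)
  qed
  qed
  show ?thesis unfolding istopology_def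
  proof (rule conjI; intro allI impI)
    fix U V assume a: "U \<subseteq> S \<and> coronal_closed TX TW f (S - U)" "V \<subseteq> S \<and> coronal_closed TX TW f (S - V)"
    show "U \<inter> V \<subseteq> S \<and> coronal_closed TX TW f (S - U \<inter> V)"
      using a by (intro A) auto
  next
    fix K assume a: "\<forall>U\<in>K. U \<subseteq> S \<and> coronal_closed TX TW f (S - U)"
    show "\<Union>K \<subseteq> S \<and> coronal_closed TX TW f (S - \<Union>K)"
      using a by (rule B)
  qed
qed

lemma cs_open:
  assumes cm: "coronal_map TX TW f"
  shows "openin (coronal_sum TX TW f) U \<longleftrightarrow>
     U \<subseteq> Inl ` topspace TX \<union> Inr ` topspace TW \<and>
     coronal_closed TX TW f ((Inl ` topspace TX \<union> Inr ` topspace TW) - U)"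
  unfolding coronal_sum_def using cs_istop[OF cm] by simp

lemma cs_topspace:
  assumes cm: "coronal_map TX TW f"
  shows "topspace (coronal_sum TX TW f) = Inl ` topspace TX \<union> Inr ` topspace TW"
proof -
  let ?S = "Inl ` topspace TX \<union> Inr ` topspace TW"
  have "openin (coronal_sum TX TW f) ?S"
    unfolding cs_open[OF cm] coronal_closed_def using cm by (auto simp: coronal_map_def)
  moreover have "openin (coronal_sum TX TW f) U \<Longrightarrow> U \<subseteq> ?S" for U
    unfolding cs_open[OF cm] by blast
  ultimately show ?thesis unfolding topspace_def by blast
qed

lemma cs_closed:
  assumes cm: "coronal_map TX TW f"
  shows "closedin (coronal_sum TX TW f) D \<longleftrightarrow> coronal_closed TX TW f D"
proof -
  let ?S = "Inl ` topspace TX \<union> Inr ` topspace TW"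
  have "closedin (coronal_sum TX TW f) D \<longleftrightarrow> D \<subseteq> ?S \<and> coronal_closed TX TW f (?S - (?S - D))"
    unfolding closedin_def cs_topspace[OF cm] cs_open[OF cm] by blast
  also have "\<dots> \<longleftrightarrow> coronal_closed TX TW f D"
    by (metis Diff_Diff_Int coronal_closed_def inf.absorb2)
  finally show ?thesis .
qed

lemma cs_closure:
  assumes cm: "coronal_map TX TW f" and B: "B \<subseteq> topspace TX"
  shows "Inr p \<in> coronal_sum TX TW f closure_of (Inl ` B) \<longleftrightarrow> p \<in> f (TX closure_of B)"
proof
  let ?C = "coronal_sum TX TW f closure_of (Inl ` B)"
  assume p: "Inr p \<in> ?C"
  let ?D = "Inl ` (TX closure_of B) \<union> Inr ` f (TX closure_of B)"
  have fc: "closedin TW (f (TX closure_of B))"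
    using cm closedin_closure_of unfolding coronal_map_def by blast
  have v1: "Inl -` ?D = TX closure_of B" by blast
  have v2: "Inr -` ?D = f (TX closure_of B)" by blast
  have sub: "?D \<subseteq> Inl ` topspace TX \<union> Inr ` topspace TW"
    using closure_of_subset_topspace[of TX B] closedin_subset[OF fc] by blast
  have "coronal_closed TX TW f ?D"
    unfolding coronal_closed_def v1 v2
    by (intro conjI sub fc closedin_closure_of Un_upper2)
  then have cD: "closedin (coronal_sum TX TW f) ?D" by (rule cs_closed[OF cm, THEN iffD2])
  have "Inl ` B \<subseteq> ?D" using closure_of_subset[OF B] by blast
  then have "?C \<subseteq> ?D" using cD by (rule closure_of_minimal)
  then show "p \<in> f (TX closure_of B)" using p by blast
next
  let ?C = "coronal_sum TX TW f closure_of (Inl ` B)"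
  assume p: "p \<in> f (TX closure_of B)"
  have cc: "coronal_closed TX TW f ?C"
    by (rule cs_closed[OF cm, THEN iffD1]) (rule closedin_closure_of)
  have c1: "closedin TX (Inl -` ?C)" and c3: "Inr ` f (Inl -` ?C) \<subseteq> ?C"
    using cc unfolding coronal_closed_def by blast+
  have "Inl ` B \<subseteq> topspace (coronal_sum TX TW f)"
    unfolding cs_topspace[OF cm] using B by blast
  then have "Inl ` B \<subseteq> ?C" by (rule closure_of_subset)
  then have "B \<subseteq> Inl -` ?C" by blast
  then have "TX closure_of B \<subseteq> Inl -` ?C" using c1 by (rule closure_of_minimal)
  then have "f (TX closure_of B) \<subseteq> f (Inl -` ?C)"
    by (rule cm_mono[OF cm closedin_closure_of c1])
  then show "Inr p \<in> ?C" using p c3 by blast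
qed

lemma pull_step:
  fixes TX :: "'a topology" and TW :: "'c topology"
  assumes cm: "coronal_map TX TW f" and P: "Pers TX \<epsilon> TW f"
    and e: "{(\<pi> y, \<pi>' y) | y. y \<in> Y} \<in> \<epsilon>" and AY: "A \<subseteq> Y"
    and pY: "\<forall>y\<in>Y. \<pi> y \<in> topspace TX" and pY': "\<forall>y\<in>Y. \<pi>' y \<in> topspace TX"
  shows "f (TX closure_of (\<pi> ` A)) \<subseteq> f (TX closure_of (\<pi>' ` A))"
proof
  fix p assume p: "p \<in> f (TX closure_of (\<pi> ` A))"
  define T where "T = coronal_sum TX TW f"
  have pA: "\<pi> ` A \<subseteq> topspace TX" "\<pi>' ` A \<subseteq> topspace TX" using AY pY pY' by auto
  have p1: "Inr p \<in> T closure_of (Inl ` \<pi> ` A)" using cs_closure[OF cm pA(1)] p T_def by simp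
  have PP: "compact_space T \<and> Hausdorff_space T \<and> T closure_of (Inl ` topspace TX) = topspace T \<and>
       compact_space TW \<and> Hausdorff_space TW \<and> (\<forall>e\<in>\<epsilon>. perspective TX TW f e)"
    using P unfolding Pers_def Let_def T_def .
  have cT: "compact_space T" and hT: "Hausdorff_space T" using PP by blast+
  have pe: "perspective TX TW f {(\<pi> y, \<pi>' y) | y. y \<in> Y}" using PP e by blast
  have pe': "prod_topology T T closure_of ((\<lambda>(a, b). (Inl a, Inl b)) ` {(\<pi> y, \<pi>' y) | y. y \<in> Y})
      \<inter> (topspace T \<times> topspace T - Inl ` topspace TX \<times> Inl ` topspace TX)
      \<subseteq> {(Inr p, Inr p) | p. p \<in> topspace TW}"
    using pe unfolding perspective_def Let_def T_def .
  have tT: "topspace T = Inl ` topspace TX \<union> Inr ` topspace TW"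
    using cs_topspace[OF cm] T_def by simp
  define EA :: "(('a + 'c) \<times> ('a + 'c)) set" where "EA = {(Inl (\<pi> y), Inl (\<pi>' y)) | y. y \<in> A}"
  define K where "K = prod_topology T T closure_of EA"
  have EAt: "EA \<subseteq> topspace (prod_topology T T)"
  proof
    fix z assume "z \<in> EA"
    then obtain y where y: "y \<in> A" "z = (Inl (\<pi> y), Inl (\<pi>' y))" unfolding EA_def by blast
    then have "\<pi> y \<in> topspace TX" "\<pi>' y \<in> topspace TX" using AY pY pY' by blast+
    then show "z \<in> topspace (prod_topology T T)" unfolding topspace_prod_topology tT y(2) by blast
  qed
  have "compact_space (prod_topology T T)" using cT compact_space_prod_topology by blast
  then have "compactin (prod_topology T T) K" unfolding K_def
    by (intro closedin_compact_space) auto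
  then have "compactin T (fst ` K)" by (rule image_compactin) (rule continuous_map_fst)
  then have cK: "closedin T (fst ` K)" using hT compactin_imp_closedin by blast
  have "EA \<subseteq> K" unfolding K_def using EAt by (rule closure_of_subset)
  then have "fst ` EA \<subseteq> fst ` K" by (rule image_mono)
  moreover have "Inl ` \<pi> ` A \<subseteq> fst ` EA"
  proof
    fix x :: "'a + 'c" assume "x \<in> Inl ` \<pi> ` A"
    then obtain y where y: "y \<in> A" "x = Inl (\<pi> y)" by blast
    then have "(x, Inl (\<pi>' y)) \<in> EA" unfolding EA_def by blast
    then show "x \<in> fst ` EA" by (rule image_eqI[rotated]) simp
  qed
  ultimately have "Inl ` \<pi> ` A \<subseteq> fst ` K" by (rule subset_trans[rotated])
  then have "T closure_of (Inl ` \<pi> ` A) \<subseteq> fst ` K" using cK by (rule closure_of_minimal)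
  then have "Inr p \<in> fst ` K" using p1 by (rule subsetD)
  then obtain z where z: "z \<in> K" "Inr p = fst z" by (rule imageE)
  define q where "q = snd z"
  have q: "(Inr p, q) \<in> K" using z unfolding q_def by simp
  have "EA \<subseteq> (\<lambda>(a, b). (Inl a, Inl b)) ` {(\<pi> y, \<pi>' y) | y. y \<in> Y}"
  proof
    fix z assume "z \<in> EA"
    then obtain y where y: "y \<in> A" "z = (Inl (\<pi> y), Inl (\<pi>' y))" unfolding EA_def by blast
    then have "(\<pi> y, \<pi>' y) \<in> {(\<pi> y, \<pi>' y) | y. y \<in> Y}" using AY by blast
    then show "z \<in> (\<lambda>(a, b). (Inl a, Inl b)) ` {(\<pi> y, \<pi>' y) | y. y \<in> Y}"
      unfolding y(2) by (rule image_eqI[rotated]) simp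
  qed
  then have "K \<subseteq> prod_topology T T closure_of ((\<lambda>(a, b). (Inl a, Inl b)) ` {(\<pi> y, \<pi>' y) | y. y \<in> Y})"
    unfolding K_def by (rule closure_of_mono)
  then have q1: "(Inr p, q) \<in> prod_topology T T closure_of ((\<lambda>(a, b). (Inl a, Inl b)) ` {(\<pi> y, \<pi>' y) | y. y \<in> Y})"
    using q by (rule subsetD)
  have "(Inr p, q) \<in> topspace (prod_topology T T)"
    using closure_of_subset_topspace[of "prod_topology T T" EA] q unfolding K_def by (rule subsetD)
  then have q2: "(Inr p, q) \<in> topspace T \<times> topspace T" by simp
  have q3: "(Inr p, q) \<notin> Inl ` topspace TX \<times> Inl ` topspace TX" by auto
  have "(Inr p, q) \<in> prod_topology T T closure_of ((\<lambda>(a, b). (Inl a, Inl b)) ` {(\<pi> y, \<pi>' y) | y. y \<in> Y})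
      \<inter> (topspace T \<times> topspace T - Inl ` topspace TX \<times> Inl ` topspace TX)"
    using q1 q2 q3 by (intro IntI DiffI)
  then have "(Inr p, q) \<in> {(Inr p, Inr p) | p. p \<in> topspace TW}"
    using pe' by blast
  then have qp: "q = Inr p" by auto
  have "EA \<subseteq> (Inl ` \<pi> ` A) \<times> (Inl ` \<pi>' ` A :: ('a + 'c) set)" unfolding EA_def by auto
  then have "K \<subseteq> (T closure_of (Inl ` \<pi> ` A)) \<times> (T closure_of (Inl ` \<pi>' ` A))"
    unfolding K_def closure_of_Times[symmetric] by (rule closure_of_mono)
  then have "Inr p \<in> T closure_of (Inl ` \<pi>' ` A)" using q qp by auto
  then show "p \<in> f (TX closure_of (\<pi>' ` A))" using cs_closure[OF cm pA(2)] T_def by simp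
qed

theorem mainTheorem20:
  fixes TX :: "'a topology" and \<epsilon> :: "('a \<times> 'a) set set"
    and TY :: "'b topology" and \<zeta> :: "('b \<times> 'b) set set"
    and TW :: "'c topology" and f :: "'a set \<Rightarrow> 'c set"
    and \<pi> \<pi>' :: "'b \<Rightarrow> 'a"
  assumes "locally_compact_space TX" "paracompact_space TX" "Hausdorff_space TX"
    and "locally_compact_space TY" "paracompact_space TY" "Hausdorff_space TY"
    and "proper_coarse_structure TX \<epsilon>" "coarsely_connected (topspace TX) \<epsilon>"
    and "proper_coarse_structure TY \<zeta>" "coarsely_connected (topspace TY) \<zeta>"
    and "coronal_map TX TW f"
    and "Pers TX \<epsilon> TW f"
    and "coarse_map (topspace TY) \<zeta> (topspace TX) \<epsilon> \<pi>"
    and "coarse_map (topspace TY) \<zeta> (topspace TX) \<epsilon> \<pi>'"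
    and "coarse_close (topspace TY) \<epsilon> \<pi> \<pi>'"
  shows "\<forall>A. closedin TY A \<longrightarrow> pull_corona TY TX TW f \<pi> A = pull_corona TY TX TW f \<pi>' A"
proof (intro allI impI)
  fix A assume A: "closedin TY A"
  then have AY: "A \<subseteq> topspace TY" by (rule closedin_subset)
  have e: "{(\<pi> y, \<pi>' y) | y. y \<in> topspace TY} \<in> \<epsilon>"
    using assms(15) unfolding coarse_close_def .
  have "converse {(\<pi> y, \<pi>' y) | y. y \<in> topspace TY} \<in> \<epsilon>"
    using e assms(7) unfolding proper_coarse_structure_def coarse_structure_def by blast
  moreover have "converse {(\<pi> y, \<pi>' y) | y. y \<in> topspace TY} = {(\<pi>' y, \<pi> y) | y. y \<in> topspace TY}"
    by auto
  ultimately have e': "{(\<pi>' y, \<pi> y) | y. y \<in> topspace TY} \<in> \<epsilon>" by simp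
  have pY: "\<forall>y\<in>topspace TY. \<pi> y \<in> topspace TX" "\<forall>y\<in>topspace TY. \<pi>' y \<in> topspace TX"
    using assms(13,14) unfolding coarse_map_def by auto
  have s1: "f (TX closure_of (\<pi> ` A)) \<subseteq> f (TX closure_of (\<pi>' ` A))"
    using pull_step[OF assms(11,12) e AY pY] .
  have s2: "f (TX closure_of (\<pi>' ` A)) \<subseteq> f (TX closure_of (\<pi> ` A))"
    using pull_step[OF assms(11,12) e' AY pY(2) pY(1)] .
  show "pull_corona TY TX TW f \<pi> A = pull_corona TY TX TW f \<pi>' A"
    unfolding pull_corona_def using s1 s2 by (simp add: subset_antisym)
qed

end
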